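(* For any $K\in\mathbb N$, there exists a $\textsc{ReLU}$+$\textsc{Step}$ network $f:\mathbb{R}\rightarrow\mathbb{R}$ of width $2$ such that $f(x)=q_K(x)$ for all $x\in[0,1]$.
   Context: $\mathcal C_K:=\{0,2^{-K},2\cdot 2^{-K},\dots,1-2^{-K}\}$ and $q_K:[0,1]\to\mathcal C_K$, $q_K(x):=\max\{c\in\mathcal C_K: c\le x\}$ (so $q_K(1)=1-2^{-K}$). $\textsc{ReLU}(x)=\max\{x,0\}$, $\textsc{Step}(x)=\mathbf 1[x\ge0]$. A $\textsc{ReLU}$+$\textsc{Step}$ network is $t_L\circ\sigma_{L-1}\circ\cdots\circ\sigma_1\circ t_1$ with affine maps $t_\ell:\mathbb R^{d_{\ell-1}}\to\mathbb R^{d_\ell}$ and $\sigma_\ell$ applying to each coordinate an activation chosen (per neuron) from $\{\textsc{ReLU},\textsc{Step}\}$; its width is $\max\{d_1,\dots,d_{L-1}\}$. *)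

theory Defs
  imports Complex_Main
begin

definition grid :: "nat \<Rightarrow> real set" where
  "grid K = {real j / 2 ^ K | j. j < 2 ^ K}"

definition quant :: "nat \<Rightarrow> real \<Rightarrow> real" where
  "quant K x = Max {c \<in> grid K. c \<le> x}"

datatype act = ReLU | Step

fun act_fun :: "act \<Rightarrow> real \<Rightarrow> real" where
  "act_fun ReLU x = max x 0"
| "act_fun Step x = (if x \<ge> 0 then 1 else 0)"

text \<open>Vectors in R^d are functions nat => real of which only indices < d matter.
  An affine map R^din -> R^dout is given by a weight matrix W and bias b.\<close>
definition affine :: "nat \<Rightarrow> (nat \<Rightarrow> nat \<Rightarrow> real) \<Rightarrow> (nat \<Rightarrow> real) \<Rightarrow> (nat \<Rightarrow> real) \<Rightarrow> (nat \<Rightarrow> real)" where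
  "affine din W b x = (\<lambda>i. (\<Sum>j<din. W i j * x j) + b i)"

text \<open>A network is given by dimensions ds = [d0,...,dL], affine maps (Ws, bs) of
  length L and per-neuron activation choices for the L-1 hidden layers.\<close>
fun net_eval :: "nat list \<Rightarrow> (nat \<Rightarrow> nat \<Rightarrow> real) list \<Rightarrow> (nat \<Rightarrow> real) list \<Rightarrow> (nat \<Rightarrow> act) list
                 \<Rightarrow> (nat \<Rightarrow> real) \<Rightarrow> (nat \<Rightarrow> real)" where
  "net_eval [d0, d1] [W] [b] [] x = affine d0 W b x"
| "net_eval (d0 # d1 # d2 # ds) (W # Ws) (b # bs) (a # as) x =
     net_eval (d1 # d2 # ds) Ws bs as (\<lambda>i. act_fun (a i) (affine d0 W b x i))"
| "net_eval _ _ _ _ x = (\<lambda>_. 0)"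

definition well_formed :: "nat list \<Rightarrow> (nat \<Rightarrow> nat \<Rightarrow> real) list \<Rightarrow> (nat \<Rightarrow> real) list \<Rightarrow> (nat \<Rightarrow> act) list \<Rightarrow> bool" where
  "well_formed ds Ws bs as \<longleftrightarrow> length ds \<ge> 2 \<and> length Ws = length ds - 1 \<and>
     length bs = length ds - 1 \<and> length as = length ds - 2"

definition width :: "nat list \<Rightarrow> nat" where
  "width ds = Max (insert 0 (set (butlast (tl ds))))"

definition net_fun :: "nat list \<Rightarrow> (nat \<Rightarrow> nat \<Rightarrow> real) list \<Rightarrow> (nat \<Rightarrow> real) list \<Rightarrow> (nat \<Rightarrow> act) list \<Rightarrow> real \<Rightarrow> real" where
  "net_fun ds Ws bs as x = net_eval ds Ws bs as (\<lambda>_. x) 0"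

end

theory Submission
  imports Defs
begin

definition gstep :: "real \<Rightarrow> real \<Rightarrow> real" where
  "gstep c s = (if c \<le> s then -2 - c else s)"

fun FF :: "real \<Rightarrow> nat \<Rightarrow> real \<Rightarrow> real" where
  "FF D 0 x = x"
| "FF D (Suc n) x = FF D n (gstep (real (Suc n) / D) x)"

definition WA :: "nat \<Rightarrow> nat \<Rightarrow> real" where "WA = (\<lambda>i j. 1)"
definition bA :: "real \<Rightarrow> nat \<Rightarrow> real" where "bA c = (\<lambda>i. if i = 0 then -10 - c else 0)"
definition aA :: "nat \<Rightarrow> act" where "aA = (\<lambda>i. if i = 0 then Step else ReLU)"
definition WB :: "real \<Rightarrow> nat \<Rightarrow> nat \<Rightarrow> real" where
  "WB c = (\<lambda>i j. if i = 0 then (if j = 0 then 8 - c else 0) else (if j = 0 then -11 else 1))"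
definition bB :: "nat \<Rightarrow> real" where "bB = (\<lambda>_. 0)"
definition aR :: "nat \<Rightarrow> act" where "aR = (\<lambda>_. ReLU)"
definition W0 :: "nat \<Rightarrow> nat \<Rightarrow> real" where "W0 = (\<lambda>i j. if i = 0 then 1 else 0)"
definition b0 :: "nat \<Rightarrow> real" where "b0 = (\<lambda>i. if i = 0 then 10 else 0)"
definition Wf :: "nat \<Rightarrow> nat \<Rightarrow> real" where "Wf = (\<lambda>i j. if i = 0 then -1 else 0)"
definition bf :: "nat \<Rightarrow> real" where "bf = (\<lambda>i. if i = 0 then 8 else 0)"
definition Wo :: "nat \<Rightarrow> nat \<Rightarrow> real" where "Wo = (\<lambda>i j. if j = 0 then 1 else 0)"
definition bo :: "nat \<Rightarrow> real" where "bo = (\<lambda>_. 0)"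

fun bWs :: "real \<Rightarrow> nat \<Rightarrow> (nat \<Rightarrow> nat \<Rightarrow> real) list" where
  "bWs D 0 = []"
| "bWs D (Suc n) = WA # WB (real (Suc n) / D) # bWs D n"
fun bbs :: "real \<Rightarrow> nat \<Rightarrow> (nat \<Rightarrow> real) list" where
  "bbs D 0 = []"
| "bbs D (Suc n) = bA (real (Suc n) / D) # bB # bbs D n"
fun bas :: "nat \<Rightarrow> (nat \<Rightarrow> act) list" where
  "bas 0 = []"
| "bas (Suc n) = aA # aR # bas n"

lemma len_b: "length (bWs D n) = 2*n" "length (bbs D n) = 2*n" "length (bas n) = 2*n"
  by (induction n) auto

lemma net_step:
  assumes "ds \<noteq> []"
  shows "net_eval (d0 # d1 # ds) (W # Ws) (b # bs) (a # as) x =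
         net_eval (d1 # ds) Ws bs as (\<lambda>i. act_fun (a i) (affine d0 W b x i))"
  using assms by (cases ds) auto

definition SS :: "(nat \<Rightarrow> real) \<Rightarrow> real" where "SS v = v 0 + v 1 - 10"

definition blockfun :: "real \<Rightarrow> (nat \<Rightarrow> real) \<Rightarrow> (nat \<Rightarrow> real)" where
  "blockfun c v = (\<lambda>i. act_fun (aR i) (affine 2 (WB c) bB
       (\<lambda>i. act_fun (aA i) (affine 2 WA (bA c) v i)) i))"

lemma block_S:
  assumes "-10 \<le> SS v" "SS v \<le> 1" "0 \<le> c" "c \<le> 1"
  shows "SS (blockfun c v) = gstep c (SS v)"
  using assms
  by (auto simp: SS_def blockfun_def affine_def aR_def WB_def bB_def aA_def WA_def bA_def
      gstep_def numeral_2_eq_2 max_def)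

lemma gstep_range: "-10 \<le> s \<Longrightarrow> s \<le> 1 \<Longrightarrow> 0 \<le> c \<Longrightarrow> -10 \<le> gstep c s \<and> gstep c s \<le> 1"
  by (auto simp: gstep_def)

lemma final_eval: "net_eval [2,2,1] [Wf, Wo] [bf, bo] [aR] v 0 = max (-2 - SS v) 0"
  by (simp add: affine_def Wf_def Wo_def bf_def bo_def aR_def SS_def numeral_2_eq_2)

lemma blocks_eval:
  assumes "D > 0" "real n \<le> D"
  shows "-10 \<le> SS v \<Longrightarrow> SS v \<le> 1 \<Longrightarrow>
    net_eval (2 # replicate (2*n) 2 @ [2,1]) (bWs D n @ [Wf, Wo]) (bbs D n @ [bf, bo])
      (bas n @ [aR]) v 0 = max (-2 - FF D n (SS v)) 0"
  using assms(2)
proof (induction n arbitrary: v)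
  case 0
  then show ?case using final_eval by simp
next
  case (Suc n)
  define c where "c = real (Suc n) / D"
  have c0: "0 \<le> c" and c1: "c \<le> 1" using Suc.prems assms(1) by (auto simp: c_def)
  have rep: "replicate (2 * Suc n) (2::nat) = 2 # 2 # replicate (2*n) 2" by simp
  have "net_eval (2 # replicate (2*Suc n) 2 @ [2,1]) (bWs D (Suc n) @ [Wf, Wo]) (bbs D (Suc n) @ [bf, bo])
      (bas (Suc n) @ [aR]) v = net_eval (2 # replicate (2*n) 2 @ [2,1]) (bWs D n @ [Wf, Wo]) (bbs D n @ [bf, bo])
      (bas n @ [aR]) (blockfun c v)"
    unfolding rep by (simp add: net_step blockfun_def c_def)
  moreover have "SS (blockfun c v) = gstep c (SS v)" using block_S Suc.prems c0 c1 by blast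
  moreover have "-10 \<le> gstep c (SS v) \<and> gstep c (SS v) \<le> 1" using gstep_range Suc.prems c0 by blast
  ultimately show ?case using Suc.IH[of "blockfun c v"] Suc.prems by (simp add: c_def)
qed

lemma FF_neg: "D > 0 \<Longrightarrow> s < 0 \<Longrightarrow> FF D n s = s"
proof (induction n)
  case 0
  then show ?case by simp
next
  case (Suc n)
  have "0 \<le> real (Suc n) / D" using Suc.prems by simp
  then have "\<not> (real (Suc n) / D \<le> s)" using Suc.prems by linarith
  then have "gstep (real (Suc n) / D) s = s" by (simp add: gstep_def)
  then show ?case using Suc by simp
qed

lemma FF_formula:
  assumes "D > 0" "x \<ge> 0"
  shows "FF D n x = (if min (nat \<lfloor>x*D\<rfloor>) n \<ge> 1 then -2 - real (min (nat \<lfloor>x*D\<rfloor>) n) / D else x)"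
proof (induction n)
  case 0
  then show ?case by simp
next
  case (Suc n)
  show ?case
  proof (cases "real (Suc n) / D \<le> x")
    case True
    then have "real (Suc n) \<le> x * D" using assms by (simp add: field_simps)
    then have "Suc n \<le> nat \<lfloor>x*D\<rfloor>" by linarith
    then have m: "min (nat \<lfloor>x*D\<rfloor>) (Suc n) = Suc n" by simp
    have "FF D (Suc n) x = -2 - real (Suc n) / D"
    proof -
      have "0 \<le> real (Suc n) / D" using assms by simp
      have "FF D n (-2 - real (Suc n) / D) = -2 - real (Suc n) / D"
      proof (rule FF_neg)
        show "0 < D" using assms by simp
        show "-2 - real (Suc n) / D < 0" using \<open>0 \<le> real (Suc n) / D\<close> by linarith
      qed
      then show ?thesis using True by (simp add: gstep_def)
    qed
    then show ?thesis using m by simp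
  next
    case False
    then have "x * D < real (Suc n)" using assms by (simp add: field_simps)
    then have "nat \<lfloor>x*D\<rfloor> \<le> n" by linarith
    then have m: "min (nat \<lfloor>x*D\<rfloor>) (Suc n) = min (nat \<lfloor>x*D\<rfloor>) n" by simp
    have eq: "FF D (Suc n) x = FF D n x" using False by (simp add: gstep_def)
    show ?thesis by (simp only: m eq Suc.IH)
  qed
qed

lemma quant_formula:
  assumes "0 \<le> x"
  shows "quant K x = real (min (nat \<lfloor>x*2^K\<rfloor>) (2^K - 1)) / 2^K"
proof -
  define j0 where "j0 = min (nat \<lfloor>x*2^K\<rfloor>) (2^K - 1::nat)"
  have fin: "finite {c \<in> grid K. c \<le> x}"
  proof -
    have "grid K = (\<lambda>j. real j / 2^K) ` {..<2^K}" by (auto simp: grid_def)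
    then show ?thesis by simp
  qed
  have "(0::nat) < 2^K" by simp
  then have j0lt: "j0 < 2^K" unfolding j0_def by linarith
  have "j0 \<le> nat \<lfloor>x*2^K\<rfloor>" unfolding j0_def by simp
  then have "real j0 \<le> real (nat \<lfloor>x*2^K\<rfloor>)" by simp
  moreover have "real (nat \<lfloor>x*2^K\<rfloor>) \<le> x * 2^K" using assms by simp
  ultimately have "real j0 \<le> x * 2^K" by linarith
  then have "real j0 / 2^K \<le> x" by (simp add: field_simps)
  then have mem: "real j0 / 2^K \<in> {c \<in> grid K. c \<le> x}" using j0lt by (auto simp: grid_def)
  have ub: "c \<le> real j0 / 2^K" if hc: "c \<in> {c \<in> grid K. c \<le> x}" for c
  proof -
    obtain j where j: "c = real j / 2^K" "j < 2^K" "c \<le> x" using hc unfolding grid_def by blast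
    then have "real j \<le> x * 2^K"
      by (metis mult_right_mono nonzero_divide_eq_eq power_eq_0_iff zero_le_numeral zero_le_power zero_neq_numeral)
    then have "j \<le> nat \<lfloor>x*2^K\<rfloor>" by linarith
    then have "j \<le> j0" using j(2) by (simp add: j0_def)
    then show ?thesis using j(1) by (simp add: divide_right_mono)
  qed
  have "quant K x = real j0 / 2^K"
    unfolding quant_def by (rule Max_eqI[OF fin ub mem])
  then show ?thesis by (simp add: j0_def)
qed

theorem lemma4:
  fixes K :: nat
  shows "\<exists>ds Ws bs as. well_formed ds Ws bs as \<and> hd ds = 1 \<and> last ds = 1 \<and>
           width ds = 2 \<and> (\<forall>x\<in>{0..1::real}. net_fun ds Ws bs as x = quant K x)"
proof -
  define N :: nat where "N = 2^K - 1"
  define D :: real where "D = 2^K"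
  have D0: "D > 0" by (simp add: D_def)
  have ND: "real N \<le> D" by (simp add: N_def D_def of_nat_diff)
  define ds where "ds = 1 # 2 # replicate (2*N) 2 @ [2,1::nat]"
  define Ws where "Ws = W0 # bWs D N @ [Wf, Wo]"
  define bs where "bs = b0 # bbs D N @ [bf, bo]"
  define as where "as = aR # bas N @ [aR]"
  have wf: "well_formed ds Ws bs as"
    by (simp add: well_formed_def ds_def Ws_def bs_def as_def len_b)
  have w: "width ds = 2"
  proof -
    have "butlast (tl ds) = 2 # replicate (2*N) 2 @ [2]" by (simp add: ds_def butlast_append)
    then have "set (butlast (tl ds)) = {2}" by auto
    then show ?thesis by (simp add: width_def)
  qed
  have f: "net_fun ds Ws bs as x = quant K x" if x: "x \<in> {0..1::real}" for x
  proof -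
    have "net_fun ds Ws bs as x = net_eval (2 # replicate (2*N) 2 @ [2,1]) (bWs D N @ [Wf, Wo])
        (bbs D N @ [bf, bo]) (bas N @ [aR]) (\<lambda>i. act_fun (aR i) (affine 1 W0 b0 (\<lambda>_. x) i)) 0"
      unfolding net_fun_def ds_def Ws_def bs_def as_def by (simp add: net_step)
    also have "\<dots> = max (-2 - FF D N x) 0"
    proof -
      have "SS (\<lambda>i. act_fun (aR i) (affine 1 W0 b0 (\<lambda>_. x) i)) = x"
        using x by (simp add: SS_def aR_def affine_def W0_def b0_def)
      then show ?thesis using blocks_eval[OF D0 ND] x by simp
    qed
    also have "\<dots> = quant K x"
    proof (cases "min (nat \<lfloor>x*D\<rfloor>) N \<ge> 1")
      case True
      then show ?thesis using x D0 by (simp add: FF_formula quant_formula N_def D_def)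
    next
      case False
      then have "min (nat \<lfloor>x*D\<rfloor>) N = 0" by (metis less_one not_le)
      then show ?thesis using x D0 by (simp add: FF_formula quant_formula N_def D_def)
    qed
    finally show ?thesis .
  qed
  show ?thesis
    apply (rule exI[of _ ds], rule exI[of _ Ws], rule exI[of _ bs], rule exI[of _ as])
    using wf w f by (simp add: ds_def)
qed

end
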